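(* Let $\mathfrak{N}_1$ and $\mathfrak{N}_2$ be properly infinite von Neumann algebras on a Hilbert space $\mathcal{H}$ such that $\mathfrak{N}_1 \subseteq \mathfrak{N}_2'$ and $X_1 X_2 \neq 0$ for all nonzero $X_1 \in \mathfrak{N}_1$ and nonzero $X_2 \in \mathfrak{N}_2$. Then for every unit vector $\Psi \in \mathcal{H}$ and every $\epsilon > 0$ there exists a unit vector $\Psi' \in \mathcal{H}$ with $\|\Psi - \Psi'\| < \epsilon$ such that the vector state $X \mapsto \langle \Psi', X\Psi'\rangle$ of $\mathfrak{N}_1 \vee \mathfrak{N}_2$ is an EPR state for incommensurable pairs.
   Context: $\mathfrak{N}'$ denotes the commutant, $\mathfrak{N}_1 \vee \mathfrak{N}_2$ the von Neumann algebra generated by $\mathfrak{N}_1$ and $\mathfrak{N}_2$, $[X,Y] = XY - YX$, $|X|^2 = X^*X$. For commuting self-adjoint operators $A_1, A_2$, a normal state $\omega$ is an EPR state for $(A_1, A_2)$ if $\omega((A_1 - A_2)^2) = 0$. A normal state $\omega$ of $\mathfrak{N}_1 \vee \mathfrak{N}_2$ is an EPR state for incommensurable pairs if there exist projections $E_1, F_1 \in \mathfrak{N}_1$ and $E_2, F_2 \in \mathfrak{N}_2$ such that $\omega$ is an EPR state for $(E_1,E_2)$ and for $(F_1,F_2)$, $\omega(|[E_1,F_1]|^2) \neq 0$, and $\omega(|[E_2,F_2]|^2) \neq 0$. *)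

theory Defs
  imports Complex_Main
begin

class complex_inner = real_normed_vector +
  fixes scaleC :: "complex \<Rightarrow> 'a \<Rightarrow> 'a"
    and cinner :: "'a \<Rightarrow> 'a \<Rightarrow> complex"
  assumes scaleC_add_right: "scaleC c (x + y) = scaleC c x + scaleC c y"
    and scaleC_add_left: "scaleC (b + c) x = scaleC b x + scaleC c x"
    and scaleC_scaleC: "scaleC b (scaleC c x) = scaleC (b * c) x"
    and scaleC_one: "scaleC 1 x = x"
    and scaleR_scaleC: "scaleR r x = scaleC (complex_of_real r) x"
    and cinner_add_right: "cinner x (y + z) = cinner x y + cinner x z"
    and cinner_scaleC_right: "cinner x (scaleC c y) = c * cinner x y"
    and cinner_commute: "cinner x y = cnj (cinner y x)"
    and cinner_self_real: "cinner x x = complex_of_real (Re (cinner x x))"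
    and cinner_self_nonneg: "0 \<le> Re (cinner x x)"
    and norm_eq_sqrt_cinner: "norm x = sqrt (Re (cinner x x))"

class chilbert_space = complex_inner + complete_space

definition bounded_op :: "('h::complex_inner \<Rightarrow> 'h) \<Rightarrow> bool" where
  "bounded_op A \<longleftrightarrow>
     (\<forall>x y. A (x + y) = A x + A y) \<and>
     (\<forall>c x. A (scaleC c x) = scaleC c (A x)) \<and>
     (\<exists>K. \<forall>x. norm (A x) \<le> norm x * K)"

text \<open>Hilbert-space adjoint (exists and is unique for bounded operators by Riesz).\<close>

definition adj :: "('h::complex_inner \<Rightarrow> 'h) \<Rightarrow> ('h \<Rightarrow> 'h)" where
  "adj A = (SOME B. bounded_op B \<and> (\<forall>x y. cinner x (A y) = cinner (B x) y))"

definition commutant :: "('h::complex_inner \<Rightarrow> 'h) set \<Rightarrow> ('h \<Rightarrow> 'h) set" where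
  "commutant M = {B. bounded_op B \<and> (\<forall>A\<in>M. A \<circ> B = B \<circ> A)}"

text \<open>Von Neumann algebra: a self-adjoint set of bounded operators equal to its
double commutant (equivalently, by the double commutant theorem, a weakly closed
unital *-subalgebra).\<close>

definition von_neumann_algebra :: "('h::complex_inner \<Rightarrow> 'h) set \<Rightarrow> bool" where
  "von_neumann_algebra M \<longleftrightarrow>
     M \<subseteq> {A. bounded_op A} \<and> (\<forall>A\<in>M. adj A \<in> M) \<and> commutant (commutant M) = M"

definition vN_join :: "('h::complex_inner \<Rightarrow> 'h) set \<Rightarrow> ('h \<Rightarrow> 'h) set \<Rightarrow> ('h \<Rightarrow> 'h) set" where
  "vN_join N1 N2 = commutant (commutant (N1 \<union> N2))"

definition zero_op :: "'h::complex_inner \<Rightarrow> 'h" where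
  "zero_op = (\<lambda>_. 0)"

definition is_projection :: "('h::complex_inner \<Rightarrow> 'h) \<Rightarrow> bool" where
  "is_projection P \<longleftrightarrow> bounded_op P \<and> P \<circ> P = P \<and> adj P = P"

text \<open>A projection P in M is infinite if it is Murray--von Neumann equivalent (via a
partial isometry in M) to a proper subprojection of itself.\<close>

definition infinite_projection :: "('h::complex_inner \<Rightarrow> 'h) set \<Rightarrow> ('h \<Rightarrow> 'h) \<Rightarrow> bool" where
  "infinite_projection M P \<longleftrightarrow>
     (\<exists>V\<in>M. adj V \<circ> V = P \<and> P \<circ> (V \<circ> adj V) = V \<circ> adj V \<and> V \<circ> adj V \<noteq> P)"

definition properly_infinite :: "('h::complex_inner \<Rightarrow> 'h) set \<Rightarrow> bool" where
  "properly_infinite M \<longleftrightarrow>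
     (\<forall>P \<in> M \<inter> commutant M. is_projection P \<and> P \<noteq> zero_op \<longrightarrow> infinite_projection M P)"

definition op_diff :: "('h::complex_inner \<Rightarrow> 'h) \<Rightarrow> ('h \<Rightarrow> 'h) \<Rightarrow> ('h \<Rightarrow> 'h)" where
  "op_diff A B = (\<lambda>x. A x - B x)"

definition commutator :: "('h::complex_inner \<Rightarrow> 'h) \<Rightarrow> ('h \<Rightarrow> 'h) \<Rightarrow> ('h \<Rightarrow> 'h)" where
  "commutator X Y = op_diff (X \<circ> Y) (Y \<circ> X)"

definition abs_sq :: "('h::complex_inner \<Rightarrow> 'h) \<Rightarrow> ('h \<Rightarrow> 'h)" where
  "abs_sq X = adj X \<circ> X"

definition vector_state :: "'h::complex_inner \<Rightarrow> ('h \<Rightarrow> 'h) \<Rightarrow> complex" where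
  "vector_state \<Psi> X = cinner \<Psi> (X \<Psi>)"

definition EPR_state :: "(('h::complex_inner \<Rightarrow> 'h) \<Rightarrow> complex) \<Rightarrow> ('h \<Rightarrow> 'h) \<Rightarrow> ('h \<Rightarrow> 'h) \<Rightarrow> bool" where
  "EPR_state \<omega> A1 A2 \<longleftrightarrow> \<omega> (op_diff A1 A2 \<circ> op_diff A1 A2) = 0"

definition EPR_incommensurable ::
  "('h::complex_inner \<Rightarrow> 'h) set \<Rightarrow> ('h \<Rightarrow> 'h) set \<Rightarrow> (('h \<Rightarrow> 'h) \<Rightarrow> complex) \<Rightarrow> bool" where
  "EPR_incommensurable N1 N2 \<omega> \<longleftrightarrow>
     (\<exists>E1\<in>N1. \<exists>F1\<in>N1. \<exists>E2\<in>N2. \<exists>F2\<in>N2.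
        is_projection E1 \<and> is_projection F1 \<and> is_projection E2 \<and> is_projection F2 \<and>
        EPR_state \<omega> E1 E2 \<and> EPR_state \<omega> F1 F2 \<and>
        \<omega> (abs_sq (commutator E1 F1)) \<noteq> 0 \<and>
        \<omega> (abs_sq (commutator E2 F2)) \<noteq> 0)"

end

theory Submission
  imports Defs
begin


lemma cinner_add_left: "cinner (x + y) (z::'a::complex_inner) = cinner x z + cinner y z"
  by (metis cinner_commute cinner_add_right complex_cnj_add)

lemma cinner_scaleC_left: "cinner (scaleC c x) (y::'a::complex_inner) = cnj c * cinner x y"
  by (metis cinner_commute cinner_scaleC_right complex_cnj_mult)

lemma cinner_zero_right[simp]: "cinner x (0::'a::complex_inner) = 0"
  using cinner_add_right[of x 0 0] by simp

lemma cinner_zero_left[simp]: "cinner (0::'a::complex_inner) x = 0"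
  using cinner_add_left[of 0 0 x] by simp

lemma cinner_diff_right: "cinner x (y - z) = cinner x y - cinner x (z::'a::complex_inner)"
  using cinner_add_right[of x "y - z" z] by (simp add: algebra_simps)

lemma cinner_diff_left: "cinner (y - z) x = cinner y x - cinner z (x::'a::complex_inner)"
  using cinner_add_left[of "y - z" z x] by (simp add: algebra_simps)

lemma cinner_scaleR_right: "cinner x (scaleR r y) = of_real r * cinner x (y::'a::complex_inner)"
  by (simp add: scaleR_scaleC cinner_scaleC_right)

lemma cinner_scaleR_left: "cinner (scaleR r x) y = of_real r * cinner x (y::'a::complex_inner)"
  by (simp add: scaleR_scaleC cinner_scaleC_left)

lemma cinner_self_norm: "cinner x (x::'a::complex_inner) = of_real (norm x ^ 2)"
  by (metis cinner_self_real cinner_self_nonneg norm_eq_sqrt_cinner real_sqrt_pow2)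

lemma cinner_self_eq_0[simp]: "cinner x (x::'a::complex_inner) = 0 \<longleftrightarrow> x = 0"
  by (simp add: cinner_self_norm)

lemma cinner_ext: "(\<And>y. cinner u y = cinner v (y::'a::complex_inner)) \<Longrightarrow> u = v"
proof -
  assume h: "\<And>y. cinner u y = cinner v (y::'a::complex_inner)"
  have "cinner (u - v) (u - v) = 0" using h[of "u-v"] by (simp add: cinner_diff_left)
  thus ?thesis by simp
qed

lemma norm_add_sq: "norm (x + y) ^ 2 = norm x ^ 2 + norm y ^ 2 + 2 * Re (cinner x (y::'a::complex_inner))"
proof -
  have "complex_of_real (norm (x+y) ^ 2) = cinner x x + cinner x y + cnj (cinner x y) + cinner y y"
    by (metis cinner_self_norm cinner_add_left cinner_add_right cinner_commute add.assoc)
  hence "norm (x+y)^2 = Re (cinner x x + cinner x y + cnj (cinner x y) + cinner y y)"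
    by (metis Re_complex_of_real)
  thus ?thesis by (simp add: cinner_self_norm)
qed

lemma norm_diff_sq: "norm (x - y) ^ 2 = norm x ^ 2 + norm y ^ 2 - 2 * Re (cinner x (y::'a::complex_inner))"
  using norm_add_sq[of x "-y"] cinner_diff_right[of x 0 y] by simp

lemma proj_norm_formula:
  fixes y w :: "'a::complex_inner"
  assumes "w \<noteq> 0"
  shows "norm (y - scaleC (cinner w y / cinner w w) w) ^ 2 = norm y ^ 2 - (cmod (cinner w y))^2 / (norm w)^2"
proof -
  define a where "a = cinner w y"
  define n where "n = norm w ^ 2"
  have n0: "n > 0" using assms by (simp add: n_def)
  have ww: "cinner w w = of_real n" by (simp add: n_def cinner_self_norm)
  have yw: "cinner y w = cnj a" by (simp add: a_def cinner_commute[of y w])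
  let ?t = "a / of_real n"
  have "complex_of_real (norm (y - scaleC ?t w) ^ 2) = cinner (y - scaleC ?t w) (y - scaleC ?t w)"
    by (simp add: cinner_self_norm)
  also have "\<dots> = cinner y y - ?t * cinner y w - cnj ?t * cinner w y + cnj ?t * ?t * cinner w w"
    by (simp add: cinner_diff_left cinner_diff_right cinner_scaleC_left cinner_scaleC_right algebra_simps)
  also have "\<dots> = cinner y y - a * cnj a / of_real n"
    using n0 by (simp add: ww yw a_def[symmetric] field_simps)
  also have "a * cnj a = of_real ((cmod a)^2)" using complex_norm_square[of a] by simp
  finally have "complex_of_real (norm (y - scaleC ?t w) ^ 2) = of_real (norm y ^ 2 - (cmod a)^2 / n)"
    by (simp add: cinner_self_norm)
  hence "norm (y - scaleC ?t w) ^ 2 = norm y ^ 2 - (cmod a)^2 / n" using of_real_eq_iff by blast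
  thus ?thesis by (simp add: a_def n_def ww)
qed

lemma cauchy_schwarz: "cmod (cinner x (y::'a::complex_inner)) \<le> norm x * norm y"
proof (cases "x = 0")
  case True thus ?thesis by simp
next
  case False
  have "0 \<le> norm y ^ 2 - (cmod (cinner x y))^2 / (norm x)^2"
    using proj_norm_formula[OF False, of y] by (metis zero_le_power2)
  hence "(cmod (cinner x y))^2 \<le> (norm x * norm y)^2"
    using False by (simp add: field_simps power_mult_distrib)
  thus ?thesis by (meson abs_le_square_iff abs_norm_cancel norm_ge_zero mult_nonneg_nonneg power2_le_imp_le)
qed



lemma parallelogram: "norm (a + b) ^ 2 + norm (a - b) ^ 2 = 2 * norm a ^ 2 + 2 * norm (b::'a::complex_inner) ^ 2"
  using norm_add_sq[of a b] norm_diff_sq[of a b] by simp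

lemma riesz:
  fixes f :: "'a::chilbert_space \<Rightarrow> complex"
  assumes fadd: "\<And>x y. f (x + y) = f x + f y"
    and fsc: "\<And>c x. f (scaleC c x) = c * f x"
    and fb: "\<And>x. cmod (f x) \<le> norm x * K"
  shows "\<exists>z. \<forall>x. f x = cinner z x"
proof (cases "\<forall>x. f x = 0")
  case True thus ?thesis by (intro exI[of _ 0]) simp
next
  case False
  then obtain x0 where fx0: "f x0 \<noteq> 0" by blast
  have f0: "f 0 = 0" using fadd[of 0 0] by simp
  have fdiff: "f (x - y) = f x - f y" for x y using fadd[of "x - y" y] by simp
  have fscR: "f (scaleR r x) = of_real r * f x" for r x by (simp add: scaleR_scaleC fsc)
  define D where "D = (\<lambda>k. norm (x0 - k)) ` {k. f k = 0}"
  define d where "d = Inf D"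
  have Dne: "D \<noteq> {}" using f0 by (auto simp: D_def)
  have Dbdd: "bdd_below D" by (auto simp: D_def intro!: bdd_belowI[of _ 0])
  have dle: "d \<le> norm (x0 - k)" if "f k = 0" for k
    unfolding d_def using Dbdd that by (auto intro!: cInf_lower simp: D_def)
  have d0: "0 \<le> d" using dle[of 0] f0 unfolding d_def
    using Dne by (auto intro!: cInf_greatest simp: D_def)
  have "\<exists>k. f k = 0 \<and> norm (x0 - k) ^ 2 < d ^ 2 + inverse (real (Suc n))" for n
  proof -
    have "d < sqrt (d^2 + inverse (real (Suc n)))"
      using d0 by (metis add.commute less_add_same_cancel2 inverse_positive_iff_positive of_nat_0_less_iff real_less_rsqrt zero_less_Suc)
    hence "Inf D < sqrt (d^2 + inverse (real (Suc n)))" by (simp add: d_def)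
    then obtain v where "v \<in> D" "v < sqrt (d^2 + inverse (real (Suc n)))"
      using cInf_lessD[OF Dne] by blast
    then obtain k where k: "f k = 0" "norm (x0 - k) < sqrt (d^2 + inverse (real (Suc n)))"
      by (auto simp: D_def)
    hence "norm (x0 - k) ^ 2 < d ^ 2 + inverse (real (Suc n))"
      by (metis norm_ge_zero real_sqrt_less_iff real_sqrt_pow2_iff real_sqrt_power abs_of_nonneg power2_less_imp_less)
    thus ?thesis using k by blast
  qed
  then obtain ks where ks: "\<And>n. f (ks n) = 0" "\<And>n. norm (x0 - ks n) ^ 2 < d ^ 2 + inverse (real (Suc n))"
    by metis
  have cbound: "norm (ks m - ks n) ^ 2 \<le> 2 * inverse (real (Suc n)) + 2 * inverse (real (Suc m))" for m n
  proof -
    let ?a = "x0 - ks n" and ?b = "x0 - ks m"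
    let ?mid = "scaleR (1/2) (ks n + ks m)"
    have "f ?mid = 0" using ks(1) by (simp add: fscR fadd)
    hence "d \<le> norm (x0 - ?mid)" by (rule dle)
    hence "d^2 \<le> norm (x0 - ?mid) ^ 2" using d0 by (simp add: power_mono)
    moreover have "?a + ?b = scaleR 2 (x0 - ?mid)" by (simp add: algebra_simps scaleR_2)
    moreover have "?a - ?b = ks m - ks n" by simp
    ultimately have "norm (ks m - ks n) ^ 2 \<le> 2 * norm ?a ^ 2 + 2 * norm ?b ^ 2 - 4 * d^2"
      using parallelogram[of ?a ?b] by (simp add: power_mult_distrib)
    thus ?thesis using ks(2)[of n] ks(2)[of m] by linarith
  qed
  have "Cauchy ks"
  proof (rule metric_CauchyI)
    fix e :: real assume e: "0 < e"
    obtain N where N: "inverse (real (Suc N)) < e^2 / 4"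
      using e reals_Archimedean[of "e^2/4"] by auto
    have "dist (ks m) (ks n) < e" if "m \<ge> N" "n \<ge> N" for m n
    proof -
      have im: "inverse (real (Suc m)) \<le> inverse (real (Suc N))" using that
        by (simp add: le_imp_inverse_le)
      have inn: "inverse (real (Suc n)) \<le> inverse (real (Suc N))" using that
        by (simp add: le_imp_inverse_le)
      have "norm (ks m - ks n) ^ 2 < e ^ 2" using cbound[of m n] im inn N by linarith
      hence "norm (ks m - ks n) < e" using e by (simp add: power_less_imp_less_base)
      thus ?thesis by (simp add: dist_norm)
    qed
    thus "\<exists>M. \<forall>m\<ge>M. \<forall>n\<ge>M. dist (ks m) (ks n) < e" by blast
  qed
  then obtain k where klim: "ks \<longlonglongrightarrow> k" using Cauchy_convergent_iff convergent_def by blast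
  have fk: "f k = 0"
  proof -
    have n0: "(\<lambda>n. norm (ks n - k)) \<longlonglongrightarrow> 0" using klim by (simp add: LIM_zero tendsto_norm_zero)
    have "(\<lambda>n. f (ks n - k)) \<longlonglongrightarrow> 0"
    proof (rule tendsto_0_le[where K = K])
      show "\<forall>\<^sub>F n in sequentially. norm (f (ks n - k)) \<le> norm (norm (ks n - k)) * K" using fb by simp
      show "(\<lambda>n. norm (ks n - k)) \<longlonglongrightarrow> 0" by (rule n0)
    qed
    hence "(\<lambda>n. - f k) \<longlonglongrightarrow> 0" using ks(1) by (simp add: fdiff)
    thus ?thesis by (simp add: LIMSEQ_const_iff)
  qed
  define y where "y = x0 - k"
  have fy: "f y = f x0" using fk by (simp add: y_def fdiff)
  have y0: "y \<noteq> 0" using fy fx0 f0 by auto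
  have ny: "norm y ^ 2 \<le> d ^ 2"
  proof (rule LIMSEQ_le)
    show "(\<lambda>n. norm (x0 - ks n) ^ 2) \<longlonglongrightarrow> norm y ^ 2"
      unfolding y_def by (intro tendsto_intros klim)
    show "(\<lambda>n. d ^ 2 + inverse (real (Suc n))) \<longlonglongrightarrow> d ^ 2"
      by (rule LIMSEQ_inverse_real_of_nat_add)
    show "\<exists>N. \<forall>n\<ge>N. norm (x0 - ks n) ^ 2 \<le> d ^ 2 + inverse (real (Suc n))"
      using ks(2) less_imp_le by blast
  qed
  have orth: "cinner w y = 0" if "f w = 0" for w
  proof (cases "w = 0")
    case True thus ?thesis by simp
  next
    case False
    let ?t = "cinner w y / cinner w w"
    have "f (k + scaleC ?t w) = 0" using fk that by (simp add: fadd fsc)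
    hence "d \<le> norm (x0 - (k + scaleC ?t w))" by (rule dle)
    hence "d ^ 2 \<le> norm (y - scaleC ?t w) ^ 2" using d0
      by (simp add: y_def algebra_simps power_mono)
    hence "norm y ^ 2 \<le> norm y ^ 2 - (cmod (cinner w y))^2 / (norm w)^2"
      using ny proj_norm_formula[OF False, of y] by linarith
    hence "(cmod (cinner w y))^2 / (norm w)^2 \<le> 0" by simp
    hence "(cmod (cinner w y))^2 \<le> 0" using False by (simp add: divide_le_0_iff)
    thus ?thesis by simp
  qed
  define z where "z = scaleC (cnj (f y / cinner y y)) y"
  have "f x = cinner z x" for x
  proof -
    have "f (scaleC (f x) y - scaleC (f y) x) = 0" by (simp add: fdiff fsc)
    hence "cinner (scaleC (f x) y - scaleC (f y) x) y = 0" by (rule orth)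
    hence "cnj (cinner (scaleC (f x) y - scaleC (f y) x) y) = 0" by simp
    hence "cinner y (scaleC (f x) y - scaleC (f y) x) = 0" by (metis cinner_commute)
    hence e: "f x * cinner y y = f y * cinner y x"
      by (simp add: cinner_diff_right cinner_scaleC_right)
    have "cinner y y \<noteq> 0" using y0 by simp
    thus ?thesis using e by (simp add: z_def cinner_scaleC_left field_simps)
  qed
  thus ?thesis by blast
qed

definition adjpair :: "('h::complex_inner \<Rightarrow> 'h) \<Rightarrow> ('h \<Rightarrow> 'h) \<Rightarrow> bool" where
  "adjpair A B \<longleftrightarrow> (\<forall>x y. cinner x (A y) = cinner (B x) y)"

lemma bounded_opD:
  assumes "bounded_op A"
  shows "A (x + y) = A x + A y" "A (scaleC c x) = scaleC c (A x)" "\<exists>K. \<forall>x. norm (A x) \<le> norm x * K"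
  using assms unfolding bounded_op_def by blast+

lemma adj_exists:
  fixes A :: "'h::chilbert_space \<Rightarrow> 'h"
  assumes A: "bounded_op A"
  shows "bounded_op (adj A) \<and> adjpair A (adj A)"
proof -
  obtain K where K: "\<And>x. norm (A x) \<le> norm x * K" using bounded_opD(3)[OF A] by blast
  have ex: "\<exists>z. \<forall>y. cinner x (A y) = cinner z y" for x
  proof (rule riesz[where K = "norm x * K"])
    show "cinner x (A (y1 + y2)) = cinner x (A y1) + cinner x (A y2)" for y1 y2
      by (simp add: bounded_opD(1)[OF A] cinner_add_right)
    show "cinner x (A (scaleC c y)) = c * cinner x (A y)" for c y
      by (simp add: bounded_opD(2)[OF A] cinner_scaleC_right)
    show "cmod (cinner x (A y)) \<le> norm y * (norm x * K)" for y
    proof -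
      have "cmod (cinner x (A y)) \<le> norm x * norm (A y)" by (rule cauchy_schwarz)
      also have "\<dots> \<le> norm x * (norm y * K)" using K by (simp add: mult_left_mono)
      finally show ?thesis by (simp add: algebra_simps)
    qed
  qed
  define B where "B x = (SOME z. \<forall>y. cinner x (A y) = cinner z y)" for x
  have Bp: "cinner x (A y) = cinner (B x) y" for x y
    unfolding B_def using someI_ex[OF ex[of x]] by blast
  have "bounded_op B"
    unfolding bounded_op_def
  proof (intro conjI allI)
    show "B (x + y) = B x + B y" for x y
      by (rule cinner_ext) (simp add: Bp[symmetric] cinner_add_left)
    show "B (scaleC c x) = scaleC c (B x)" for c x
      by (rule cinner_ext) (simp add: Bp[symmetric] cinner_scaleC_left)
    show "\<exists>K'. \<forall>x. norm (B x) \<le> norm x * K'"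
    proof (intro exI allI)
      fix x
      have "norm (B x) ^ 2 = Re (cinner (B x) (B x))" by (simp add: cinner_self_norm)
      also have "\<dots> = Re (cinner x (A (B x)))" by (simp add: Bp)
      also have "\<dots> \<le> cmod (cinner x (A (B x)))" by (rule complex_Re_le_cmod)
      also have "\<dots> \<le> norm x * norm (A (B x))" by (rule cauchy_schwarz)
      also have "\<dots> \<le> norm x * (norm (B x) * K)" using K by (simp add: mult_left_mono)
      finally have h: "norm (B x) ^ 2 \<le> norm (B x) * (norm x * K)" by (simp add: algebra_simps)
      show "norm (B x) \<le> norm x * K"
      proof (cases "B x = 0")
        case True
        have "0 \<le> norm (A x)" by simp
        thus ?thesis using True K[of x] by (metis norm_zero order_trans)
      next
        case False
        thus ?thesis using h by (simp add: power2_eq_square)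
      qed
    qed
  qed
  hence "\<exists>B. bounded_op B \<and> (\<forall>x y. cinner x (A y) = cinner (B x) y)" using Bp by blast
  hence "bounded_op (adj A) \<and> (\<forall>x y. cinner x (A y) = cinner (adj A x) y)"
    unfolding adj_def by (rule someI_ex)
  thus ?thesis by (simp add: adjpair_def)
qed

lemma adj_unique:
  fixes A B :: "'h::complex_inner \<Rightarrow> 'h"
  assumes "bounded_op B" "adjpair A B"
  shows "adj A = B"
proof -
  have ex: "\<exists>B. bounded_op B \<and> (\<forall>x y. cinner x (A y) = cinner (B x) y)" using assms
    by (auto simp: adjpair_def)
  have h: "\<forall>x y. cinner x (A y) = cinner (adj A x) y"
    using someI_ex[OF ex] unfolding adj_def by blast
  show ?thesis
  proof
    fix x show "adj A x = B x"
      by (rule cinner_ext) (metis h assms(2) adjpair_def)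
  qed
qed



definition op_add :: "('h::complex_inner \<Rightarrow> 'h) \<Rightarrow> ('h \<Rightarrow> 'h) \<Rightarrow> ('h \<Rightarrow> 'h)" where
  "op_add A B = (\<lambda>x. A x + B x)"
definition op_sc :: "real \<Rightarrow> ('h::complex_inner \<Rightarrow> 'h) \<Rightarrow> ('h \<Rightarrow> 'h)" where
  "op_sc r A = (\<lambda>x. scaleR r (A x))"

lemma bop_add: "bounded_op A \<Longrightarrow> A (x + y) = A x + A y" by (simp add: bounded_opD)
lemma bop_scaleC: "bounded_op A \<Longrightarrow> A (scaleC c x) = scaleC c (A x)" by (simp add: bounded_opD)
lemma bop_zero: "bounded_op A \<Longrightarrow> A 0 = 0" using bop_add[of A 0 0] by simp
lemma bop_diff: "bounded_op A \<Longrightarrow> A (x - y) = A x - A y" using bop_add[of A "x - y" y] by simp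
lemma bop_scaleR: "bounded_op A \<Longrightarrow> A (scaleR r x) = scaleR r (A x)" by (simp add: scaleR_scaleC bop_scaleC)

lemma scaleC_zero_right[simp]: "scaleC c (0::'a::complex_inner) = 0"
  using scaleC_add_right[of c "0::'a" 0] by simp

lemma scaleC_minus: "scaleC c (-x) = - scaleC c (x::'a::complex_inner)"
  using scaleC_add_right[of c x "-x"] by (metis add.right_inverse add_eq_0_iff scaleC_zero_right)
  
lemma scaleC_diff_right: "scaleC c (x - y) = scaleC c x - scaleC c (y::'a::complex_inner)"
  using scaleC_add_right[of c x "-y"] scaleC_minus[of c y] by simp

lemma bounded_id: "bounded_op (id::'h::complex_inner \<Rightarrow> 'h)"
  unfolding bounded_op_def by (auto intro: exI[of _ 1])

lemma bounded_comp: assumes "bounded_op A" "bounded_op B" shows "bounded_op (A \<circ> B)"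
proof -
  obtain K where K: "\<And>x. norm (A x) \<le> norm x * K" using bounded_opD(3)[OF assms(1)] by blast
  obtain L where L: "\<And>x. norm (B x) \<le> norm x * L" using bounded_opD(3)[OF assms(2)] by blast
  have K0: "0 \<le> K \<or> (\<forall>x. A x = 0)"
  proof (cases "0 \<le> K")
    case False
    have "A x = 0" for x
    proof -
      have "norm x * K \<le> 0" using False by (simp add: mult_nonneg_nonpos)
      hence "norm (A x) \<le> 0" using K[of x] by linarith
      thus ?thesis by simp
    qed
    thus ?thesis by blast
  qed simp
  show ?thesis unfolding bounded_op_def
  proof (intro conjI allI)
    show "(A \<circ> B) (x + y) = (A \<circ> B) x + (A \<circ> B) y" for x y using assms by (simp add: bop_add)
    show "(A \<circ> B) (scaleC c x) = scaleC c ((A \<circ> B) x)" for c x using assms by (simp add: bop_scaleC)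
    show "\<exists>K. \<forall>x. norm ((A \<circ> B) x) \<le> norm x * K"
    proof (cases "0 \<le> K")
      case True
      have "norm ((A \<circ> B) x) \<le> norm x * (L * K)" for x
      proof -
        have "norm (A (B x)) \<le> norm (B x) * K" by (rule K)
        also have "\<dots> \<le> norm x * L * K" using L True by (simp add: mult_right_mono)
        finally show ?thesis by (simp add: mult.assoc)
      qed
      thus ?thesis by blast
    next
      case False thus ?thesis using K0 by (intro exI[of _ 0]) auto
    qed
  qed
qed

lemma bounded_add: assumes "bounded_op A" "bounded_op B" shows "bounded_op (op_add A B)"
proof -
  obtain K where K: "\<And>x. norm (A x) \<le> norm x * K" using bounded_opD(3)[OF assms(1)] by blast
  obtain L where L: "\<And>x. norm (B x) \<le> norm x * L" using bounded_opD(3)[OF assms(2)] by blast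
  show ?thesis unfolding bounded_op_def op_add_def
  proof (intro conjI allI)
    show "A (x + y) + B (x + y) = A x + B x + (A y + B y)" for x y using assms by (simp add: bop_add algebra_simps)
    show "A (scaleC c x) + B (scaleC c x) = scaleC c (A x + B x)" for c x using assms by (simp add: bop_scaleC scaleC_add_right)
    have "norm (A x + B x) \<le> norm x * (K + L)" for x
      using norm_triangle_ineq[of "A x" "B x"] K[of x] L[of x] by (simp add: algebra_simps)
    thus "\<exists>K. \<forall>x. norm (A x + B x) \<le> norm x * K" by blast
  qed
qed

lemma bounded_sc: assumes "bounded_op A" shows "bounded_op (op_sc r A)"
proof -
  obtain K where K: "\<And>x. norm (A x) \<le> norm x * K" using bounded_opD(3)[OF assms(1)] by blast
  show ?thesis unfolding bounded_op_def op_sc_def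
  proof (intro conjI allI)
    show "scaleR r (A (x + y)) = scaleR r (A x) + scaleR r (A y)" for x y using assms by (simp add: bop_add algebra_simps)
    show "scaleR r (A (scaleC c x)) = scaleC c (scaleR r (A x))" for c x using assms
      by (simp add: bop_scaleC scaleR_scaleC scaleC_scaleC mult.commute)
    have "norm (scaleR r (A x)) \<le> norm x * (\<bar>r\<bar> * K)" for x
      using mult_left_mono[OF K[of x], of "\<bar>r\<bar>"] by (simp add: algebra_simps)
    thus "\<exists>K. \<forall>x. norm (scaleR r (A x)) \<le> norm x * K" by blast
  qed
qed

lemma op_diff_alt: "op_diff A B = op_add A (op_sc (-1) B)"
  by (simp add: op_diff_def op_add_def op_sc_def fun_eq_iff)

lemma bounded_diff: "bounded_op A \<Longrightarrow> bounded_op B \<Longrightarrow> bounded_op (op_diff A B)"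
  by (simp add: op_diff_alt bounded_add bounded_sc)

lemma comm_id: "id \<in> commutant M" by (simp add: commutant_def bounded_id)
lemma comm_comp: "A \<in> commutant M \<Longrightarrow> B \<in> commutant M \<Longrightarrow> A \<circ> B \<in> commutant M"
proof -
  assume a: "A \<in> commutant M" "B \<in> commutant M"
  have "C \<circ> (A \<circ> B) = (A \<circ> B) \<circ> C" if "C \<in> M" for C
  proof -
    have "C \<circ> A = A \<circ> C" "C \<circ> B = B \<circ> C" using a that by (auto simp: commutant_def)
    hence "\<And>x. C (A x) = A (C x)" "\<And>x. C (B x) = B (C x)" by (metis comp_apply)+
    thus ?thesis by (simp add: fun_eq_iff)
  qed
  thus ?thesis using a by (auto simp: commutant_def bounded_comp)
qed
lemma comm_add: "A \<in> commutant M \<Longrightarrow> B \<in> commutant M \<Longrightarrow> M \<subseteq> {A. bounded_op A} \<Longrightarrow> op_add A B \<in> commutant M"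
proof -
  assume a: "A \<in> commutant M" "B \<in> commutant M" "M \<subseteq> {A. bounded_op A}"
  have "C \<circ> op_add A B = op_add A B \<circ> C" if "C \<in> M" for C
  proof -
    have bC: "bounded_op C" using a(3) that by auto
    have "C \<circ> A = A \<circ> C" "C \<circ> B = B \<circ> C" using a that by (auto simp: commutant_def)
    hence "\<And>x. C (A x) = A (C x)" "\<And>x. C (B x) = B (C x)" by (metis comp_apply)+
    thus ?thesis using bC by (simp add: fun_eq_iff op_add_def bop_add)
  qed
  thus ?thesis using a by (auto simp: commutant_def bounded_add)
qed
lemma comm_sc: "A \<in> commutant M \<Longrightarrow> M \<subseteq> {A. bounded_op A} \<Longrightarrow> op_sc r A \<in> commutant M"
proof -
  assume a: "A \<in> commutant M" "M \<subseteq> {A. bounded_op A}"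
  have "C \<circ> op_sc r A = op_sc r A \<circ> C" if "C \<in> M" for C
  proof -
    have bC: "bounded_op C" using a(2) that by auto
    have "C \<circ> A = A \<circ> C" using a that by (auto simp: commutant_def)
    hence "\<And>x. C (A x) = A (C x)" by (metis comp_apply)
    thus ?thesis using bC by (simp add: fun_eq_iff op_sc_def bop_scaleR)
  qed
  thus ?thesis using a by (auto simp: commutant_def bounded_sc)
qed

lemma commutant_bounded: "commutant M \<subseteq> {A. bounded_op A}" by (auto simp: commutant_def)

lemma vn_eq: "von_neumann_algebra N \<Longrightarrow> N = commutant (commutant N)" by (simp add: von_neumann_algebra_def)
lemma vn_bounded: "von_neumann_algebra N \<Longrightarrow> A \<in> N \<Longrightarrow> bounded_op A"
  by (auto simp: von_neumann_algebra_def)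
lemma vn_mem: "von_neumann_algebra N \<Longrightarrow> A \<in> commutant (commutant N) \<Longrightarrow> A \<in> N"
  by (simp add: von_neumann_algebra_def)
lemma vn_mem': "von_neumann_algebra N \<Longrightarrow> A \<in> N \<Longrightarrow> A \<in> commutant (commutant N)"
  by (simp add: von_neumann_algebra_def)
lemma vn_id: "von_neumann_algebra N \<Longrightarrow> id \<in> N" by (rule vn_mem, assumption, rule comm_id)
lemma vn_comp: "von_neumann_algebra N \<Longrightarrow> A \<in> N \<Longrightarrow> B \<in> N \<Longrightarrow> A \<circ> B \<in> N"
  by (rule vn_mem, assumption, rule comm_comp; rule vn_mem'; assumption)
lemma vn_add: "von_neumann_algebra N \<Longrightarrow> A \<in> N \<Longrightarrow> B \<in> N \<Longrightarrow> op_add A B \<in> N"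
  by (rule vn_mem, assumption, rule comm_add, (rule vn_mem'; assumption)+, rule commutant_bounded)
lemma vn_sc: "von_neumann_algebra N \<Longrightarrow> A \<in> N \<Longrightarrow> op_sc r A \<in> N"
  by (rule vn_mem, assumption, rule comm_sc, (rule vn_mem'; assumption), rule commutant_bounded)
lemma vn_diff: "von_neumann_algebra N \<Longrightarrow> A \<in> N \<Longrightarrow> B \<in> N \<Longrightarrow> op_diff A B \<in> N"
  by (simp add: op_diff_alt vn_add vn_sc)
lemma vn_pow: "von_neumann_algebra N \<Longrightarrow> A \<in> N \<Longrightarrow> A ^^ k \<in> N"
  by (induction k) (auto simp: vn_id vn_comp)

lemma adjpair_id: "adjpair id id" by (simp add: adjpair_def)
lemma adjpair_sym: "adjpair A B \<Longrightarrow> adjpair B A"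
  unfolding adjpair_def
proof (intro allI)
  fix x y assume h: "\<forall>x y. cinner x (A y) = cinner (B x) y"
  have "cinner x (B y) = cnj (cinner (B y) x)" by (rule cinner_commute)
  also have "\<dots> = cnj (cinner y (A x))" using h by simp
  also have "\<dots> = cinner (A x) y" by (rule cinner_commute[symmetric])
  finally show "cinner x (B y) = cinner (A x) y" .
qed
lemma adjpair_comp: "adjpair A A' \<Longrightarrow> adjpair B B' \<Longrightarrow> adjpair (A \<circ> B) (B' \<circ> A')"
  unfolding adjpair_def by simp
lemma adjpair_add: "adjpair A A' \<Longrightarrow> adjpair B B' \<Longrightarrow> adjpair (op_add A B) (op_add A' B')"
  unfolding adjpair_def op_add_def by (simp add: cinner_add_left cinner_add_right)
lemma adjpair_sc: "adjpair A A' \<Longrightarrow> adjpair (op_sc r A) (op_sc r A')"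
  unfolding adjpair_def op_sc_def by (simp add: cinner_scaleR_left cinner_scaleR_right)
lemma adjpair_diff: "adjpair A A' \<Longrightarrow> adjpair B B' \<Longrightarrow> adjpair (op_diff A B) (op_diff A' B')"
  unfolding op_diff_alt by (simp add: adjpair_add adjpair_sc)
lemma adjpair_pow: "adjpair A A' \<Longrightarrow> adjpair (A ^^ k) (A' ^^ k)"
proof (induction k)
  case 0 thus ?case using adjpair_id by (simp add: id_def)
next
  case (Suc k)
  have "adjpair (A ^^ k \<circ> A) (A' \<circ> A' ^^ k)" using Suc by (simp add: adjpair_comp)
  moreover have e1: "A ^^ Suc k = A ^^ k \<circ> A" by (rule funpow_Suc_right)
  moreover have e2: "A' ^^ Suc k = A' \<circ> A' ^^ k" by (rule funpow.simps(2))
  ultimately show ?case unfolding e1 e2 by blast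
qed

lemma adjpair_norm: "adjpair A B \<Longrightarrow> (\<And>x. B (A x) = x) \<Longrightarrow> norm (A x) = norm x"
proof -
  assume a: "adjpair A B" "\<And>x. B (A x) = x"
  have "cinner (A x) (A x) = cinner (B (A x)) x" using a(1) unfolding adjpair_def by blast
  hence "cinner (A x) (A x) = cinner x x" using a(2) by simp
  hence "norm (A x) ^ 2 = norm x ^ 2" unfolding cinner_self_norm using of_real_eq_iff by blast
  thus ?thesis by (simp add: power2_eq_iff_nonneg)
qed

lemma adjpairD: "adjpair A B \<Longrightarrow> cinner x (A y) = cinner (B x) y"
  unfolding adjpair_def by blast

lemma proj_norm_le:
  assumes "adjpair P P" "\<And>x. P (P x) = P x" "bounded_op P"
  shows "norm (P x) \<le> norm x"
proof -
  have "cinner (P x) (P x) = cinner x (P (P x))" using adjpairD[OF assms(1), of x "P x"] by (rule sym)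
  also have "\<dots> = cinner x (P x)" using assms(2) by simp
  also have "\<dots> = cinner (P x) x" by (rule adjpairD[OF assms(1)])
  finally have h: "cinner (P x) (P x) = cinner (P x) x" .
  have "cinner (P x) (x - P x) = 0" unfolding cinner_diff_right h by simp
  hence "norm (P x + (x - P x)) ^ 2 = norm (P x) ^ 2 + norm (x - P x) ^ 2"
    using norm_add_sq[of "P x" "x - P x"] by simp
  hence "norm x ^ 2 = norm (P x) ^ 2 + norm (x - P x) ^ 2" by simp
  hence "norm (P x) ^ 2 \<le> norm x ^ 2" by simp
  thus ?thesis by (rule power2_le_imp_le) simp
qed



definition munits :: "('h::complex_inner \<Rightarrow> 'h) \<Rightarrow> ('h \<Rightarrow> 'h) \<Rightarrow> ('h \<Rightarrow> 'h) \<Rightarrow> ('h \<Rightarrow> 'h) \<Rightarrow> bool" where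
  "munits e t t' g \<longleftrightarrow> (\<forall>x. e (e x) = e x \<and> e (t x) = 0 \<and> e (t' x) = t' x \<and> e (g x) = 0 \<and>
     t (e x) = t x \<and> t (t x) = 0 \<and> t (t' x) = g x \<and> t (g x) = 0 \<and>
     t' (e x) = 0 \<and> t' (t x) = e x \<and> t' (t' x) = 0 \<and> t' (g x) = t' x \<and>
     g (e x) = 0 \<and> g (t x) = t x \<and> g (t' x) = 0 \<and> g (g x) = g x)"

lemma mu_from:
  assumes "\<And>x. W (V x) = x" "\<And>x. e (e x) = e x" "\<And>x. e (V (e x)) = 0" "\<And>x. e (W (e x)) = 0"
    "V 0 = 0" "e 0 = 0" "W 0 = 0"
  shows "munits e (V \<circ> e) (e \<circ> W) (V \<circ> e \<circ> W)"
  unfolding munits_def using assms by simp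

lemma units:
  fixes N :: "('h::chilbert_space \<Rightarrow> 'h) set" and \<Psi> :: 'h
  assumes vn: "von_neumann_algebra N" and pi: "properly_infinite N" and psi: "\<Psi> \<noteq> 0" and eta: "\<eta> > 0"
  shows "\<exists>e t t' g. e \<in> N \<and> t \<in> N \<and> t' \<in> N \<and> g \<in> N \<and> adjpair e e \<and> adjpair t t' \<and> adjpair g g \<and>
     munits e t t' g \<and> (\<exists>x. e x \<noteq> 0) \<and> norm (e \<Psi>) < \<eta> \<and> norm (g \<Psi>) < \<eta>"
proof -
  have idN: "id \<in> N \<inter> commutant N" using vn_id[OF vn] comm_id by blast
  have pid: "is_projection (id :: 'h \<Rightarrow> 'h)"
    unfolding is_projection_def using bounded_id adj_unique[OF bounded_id adjpair_id] by simp
  have nz: "(id :: 'h \<Rightarrow> 'h) \<noteq> zero_op" using psi by (auto simp: zero_op_def fun_eq_iff)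
  have "infinite_projection N id" using pi idN pid nz unfolding properly_infinite_def by blast
  then obtain V where VN: "V \<in> N" and WV0: "adj V \<circ> V = id" and VW0: "V \<circ> adj V \<noteq> id"
    unfolding infinite_projection_def by auto
  define W where "W = adj V"
  have WN: "W \<in> N" using vn VN unfolding von_neumann_algebra_def W_def by blast
  have bV: "bounded_op V" using vn_bounded[OF vn VN] .
  have bW: "bounded_op W" and apVW: "adjpair V W" using adj_exists[OF bV] by (auto simp: W_def)
  have WV: "W (V x) = x" for x using fun_cong[OF WV0, of x] by (simp add: W_def)
  define P0 where "P0 = op_diff id (V \<circ> W)"
  have P0N: "P0 \<in> N" unfolding P0_def by (intro vn_diff vn_comp vn_id vn VN WN)
  have bP0: "bounded_op P0" using vn_bounded[OF vn P0N] .
  have P0x: "P0 x = x - V (W x)" for x by (simp add: P0_def op_diff_def)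
  have P0V: "P0 (V x) = 0" for x by (simp add: P0x WV)
  have WP0: "W (P0 x) = 0" for x by (simp add: P0x WV bop_diff[OF bW])
  have P0P0: "P0 (P0 x) = P0 x" for x by (simp add: P0x WP0 bop_zero[OF bV] bop_diff[OF bW] WV)
  have apP0: "adjpair P0 P0" unfolding P0_def
    using adjpair_diff[OF adjpair_id adjpair_comp[OF apVW adjpair_sym[OF apVW]]] .
  obtain x0 where x0: "P0 x0 \<noteq> 0"
  proof -
    have "\<exists>x. V (W x) \<noteq> x" using VW0 by (auto simp: fun_eq_iff W_def)
    thus ?thesis using that by (metis P0x eq_iff_diff_eq_0)
  qed
  have Vnorm: "norm (V x) = norm x" for x using adjpair_norm[OF apVW WV] .
  have decomp: "norm y ^ 2 = norm (P0 y) ^ 2 + norm (W y) ^ 2" for y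
  proof -
    have "cinner (P0 y) (V (W y)) = cinner (W (P0 y)) (W y)" by (rule adjpairD[OF apVW])
    hence o: "cinner (P0 y) (V (W y)) = 0" by (simp add: WP0)
    have "y = P0 y + V (W y)" by (simp add: P0x)
    hence "norm y ^ 2 = norm (P0 y + V (W y)) ^ 2" by simp
    also have "\<dots> = norm (P0 y) ^ 2 + norm (W y) ^ 2" using norm_add_sq[of "P0 y" "V (W y)"] o Vnorm by simp
    finally show ?thesis .
  qed
  define a where "a j = norm (P0 ((W ^^ j) \<Psi>)) ^ 2" for j
  have sum_a: "(\<Sum>j<n. a j) = norm \<Psi> ^ 2 - norm ((W ^^ n) \<Psi>) ^ 2" for n
  proof (induction n)
    case 0 thus ?case by simp
  next
    case (Suc n)
    have "norm ((W ^^ n) \<Psi>) ^ 2 = a n + norm ((W ^^ Suc n) \<Psi>) ^ 2"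
      using decomp[of "(W ^^ n) \<Psi>"] by (simp add: a_def)
    thus ?case using Suc by simp
  qed
  have "summable a"
  proof (rule summableI_nonneg_bounded)
    show "0 \<le> a n" for n by (simp add: a_def)
    show "sum a {..<n} \<le> norm \<Psi> ^ 2" for n using sum_a[of n] by simp
  qed
  hence "a \<longlonglongrightarrow> 0" by (rule summable_LIMSEQ_zero)
  then obtain j where j: "\<And>n. n \<ge> j \<Longrightarrow> \<bar>a n - 0\<bar> < \<eta> ^ 2"
    using LIMSEQ_D[of a 0 "\<eta>^2"] eta by (auto simp: dist_real_def)
  have aj: "a j < \<eta> ^ 2" "a (Suc j) < \<eta> ^ 2" using j[of j] j[of "Suc j"] by auto
  define Vk where "Vk = V ^^ j"
  define Wk where "Wk = W ^^ j"
  have VkN: "Vk \<in> N" "Wk \<in> N" unfolding Vk_def Wk_def by (intro vn_pow vn VN WN)+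
  have bVk: "bounded_op Vk" "bounded_op Wk" using vn_bounded[OF vn] VkN by auto
  have apk: "adjpair Vk Wk" unfolding Vk_def Wk_def by (rule adjpair_pow[OF apVW])
  have WVk: "Wk (Vk x) = x" for x unfolding Vk_def Wk_def
    by (induction j arbitrary: x) (simp_all add: WV funpow_swap1)
  have Vkswap: "Vk (V x) = V (Vk x)" for x unfolding Vk_def by (simp add: funpow_swap1)
  have Wkswap: "Wk (W x) = W (Wk x)" for x unfolding Wk_def by (simp add: funpow_swap1)
  have Vknorm: "norm (Vk x) = norm x" for x using adjpair_norm[OF apk WVk] .
  define e where "e = Vk \<circ> (P0 \<circ> Wk)"
  have ex: "e x = Vk (P0 (Wk x))" for x by (simp add: e_def)
  have eN: "e \<in> N" unfolding e_def by (intro vn_comp vn VkN P0N)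
  have ape: "adjpair e e"
  proof -
    have "adjpair (Vk \<circ> (P0 \<circ> Wk)) ((Vk \<circ> P0) \<circ> Wk)"
      by (intro adjpair_comp apk apP0 adjpair_sym[OF apk])
    thus ?thesis by (simp add: e_def comp_assoc)
  qed
  have ee: "e (e x) = e x" for x by (simp add: ex WVk P0P0)
  have eVe: "e (V (e x)) = 0" for x by (simp add: ex Vkswap[symmetric] WVk P0V bop_zero[OF bVk(1)])
  have eWe: "e (W (e x)) = 0" for x
    by (simp add: ex Wkswap WVk WP0 bop_zero[OF bVk(1)] bop_zero[OF bP0])
  have mu: "munits e (V \<circ> e) (e \<circ> W) (V \<circ> e \<circ> W)"
    by (rule mu_from[OF WV ee eVe eWe bop_zero[OF bV]]) (simp_all add: ex bop_zero bVk bP0 bW)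
  have tN: "V \<circ> e \<in> N" "e \<circ> W \<in> N" "V \<circ> e \<circ> W \<in> N" by (intro vn_comp vn VN WN eN)+
  have apt: "adjpair (V \<circ> e) (e \<circ> W)" by (rule adjpair_comp[OF apVW ape])
  have apg: "adjpair (V \<circ> e \<circ> W) (V \<circ> e \<circ> W)"
  proof -
    have "adjpair ((V \<circ> e) \<circ> W) (V \<circ> (e \<circ> W))" by (rule adjpair_comp[OF apt adjpair_sym[OF apVW]])
    thus ?thesis by (simp add: comp_assoc)
  qed
  have enz: "\<exists>x. e x \<noteq> 0"
  proof
    have "e (Vk (P0 x0)) = Vk (P0 x0)" by (simp add: ex WVk P0P0)
    moreover have "Vk (P0 x0) \<noteq> 0" using Vknorm[of "P0 x0"] x0 by auto
    ultimately show "e (Vk (P0 x0)) \<noteq> 0" by simp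
  qed
  have "norm (e \<Psi>) ^ 2 = a j" by (simp add: ex Vknorm a_def Wk_def)
  hence n1: "norm (e \<Psi>) < \<eta>" using aj eta by (metis norm_ge_zero power2_less_imp_less less_imp_le)
  have "norm ((V \<circ> e \<circ> W) \<Psi>) ^ 2 = a (Suc j)"
    by (simp add: ex Vknorm Vnorm a_def Wk_def funpow_swap1)
  hence n2: "norm ((V \<circ> e \<circ> W) \<Psi>) < \<eta>" using aj eta by (metis norm_ge_zero power2_less_imp_less less_imp_le)
  show ?thesis using eN tN ape apt apg mu enz n1 n2 by blast
qed



lemma abs_sq_nonzero:
  fixes C :: "'h::chilbert_space \<Rightarrow> 'h"
  assumes "bounded_op C" "C \<Psi> \<noteq> 0"
  shows "vector_state \<Psi> (abs_sq C) \<noteq> 0"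
proof -
  have ap: "adjpair (adj C) C" using adj_exists[OF assms(1)] adjpair_sym by blast
  have "vector_state \<Psi> (abs_sq C) = cinner \<Psi> (adj C (C \<Psi>))" by (simp add: vector_state_def abs_sq_def)
  also have "\<dots> = cinner (C \<Psi>) (C \<Psi>)" by (rule adjpairD[OF ap])
  finally show ?thesis using assms(2) by simp
qed

lemma proj_of:
  fixes P :: "'h::chilbert_space \<Rightarrow> 'h"
  assumes "bounded_op P" "adjpair P P" "\<And>x. P (P x) = P x"
  shows "is_projection P"
  unfolding is_projection_def using assms adj_unique[OF assms(1,2)] by (auto simp: fun_eq_iff)

definition mkF :: "('h::complex_inner \<Rightarrow> 'h) \<Rightarrow> ('h \<Rightarrow> 'h) \<Rightarrow> ('h \<Rightarrow> 'h) \<Rightarrow> ('h \<Rightarrow> 'h) \<Rightarrow> ('h \<Rightarrow> 'h)" where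
  "mkF e t t' g = op_sc (1/2) (op_add (op_add e g) (op_add t t'))"

lemma mkF_apply: "mkF e t t' g x = scaleR (1/2) (e x + g x + (t x + t' x))"
  by (simp add: mkF_def op_sc_def op_add_def)

lemma mkF_props:
  fixes e t t' g :: "'h::chilbert_space \<Rightarrow> 'h"
  assumes vn: "von_neumann_algebra N" and mem: "e \<in> N" "t \<in> N" "t' \<in> N" "g \<in> N"
    and ap: "adjpair e e" "adjpair t t'" "adjpair g g" and mu: "munits e t t' g"
  shows "mkF e t t' g \<in> N" "is_projection (mkF e t t' g)" "is_projection e"
proof -
  show FN: "mkF e t t' g \<in> N" unfolding mkF_def by (intro vn_sc vn_add vn mem)
  have b: "bounded_op e" "bounded_op t" "bounded_op t'" "bounded_op g" using vn_bounded[OF vn] mem by auto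
  have apF: "adjpair (mkF e t t' g) (op_sc (1/2) (op_add (op_add e g) (op_add t' t)))"
    unfolding mkF_def by (intro adjpair_sc adjpair_add ap adjpair_sym[OF ap(2)])
  have "op_add t' t = op_add t t'" by (simp add: op_add_def fun_eq_iff add.commute)
  hence apF': "adjpair (mkF e t t' g) (mkF e t t' g)" using apF by (simp add: mkF_def)
  have m: "\<And>x. e (e x) = e x \<and> e (t x) = 0 \<and> e (t' x) = t' x \<and> e (g x) = 0 \<and>
     t (e x) = t x \<and> t (t x) = 0 \<and> t (t' x) = g x \<and> t (g x) = 0 \<and>
     t' (e x) = 0 \<and> t' (t x) = e x \<and> t' (t' x) = 0 \<and> t' (g x) = t' x \<and>
     g (e x) = 0 \<and> g (t x) = t x \<and> g (t' x) = 0 \<and> g (g x) = g x" using mu by (simp add: munits_def)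
  have "mkF e t t' g (mkF e t t' g x) = mkF e t t' g x" for x
  proof -
    define u where "u = e x + g x + (t x + t' x)"
    have eu: "e u = e x + t' x" by (simp add: u_def b bop_add m)
    have gu: "g u = g x + t x" by (simp add: u_def b bop_add m)
    have tu: "t u = t x + g x" by (simp add: u_def b bop_add m)
    have t'u: "t' u = t' x + e x" by (simp add: u_def b bop_add m)
    have s: "e u + g u + (t u + t' u) = scaleR 2 u"
    proof -
      have "e u + g u + (t u + t' u) = e x + t' x + (g x + t x) + (t x + g x + (t' x + e x))"
        by (simp only: eu gu tu t'u)
      also have "\<dots> = scaleR 2 u" by (simp add: u_def scaleR_2 algebra_simps)
      finally show ?thesis .
    qed
    have "mkF e t t' g (mkF e t t' g x) = scaleR (1/2) (scaleR (1/2) (e u + g u + (t u + t' u)))"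
      unfolding mkF_apply u_def[symmetric] by (simp add: b bop_scaleR scaleR_add_right)
    also have "\<dots> = scaleR (1/2) u" unfolding s by simp
    finally show ?thesis by (simp add: mkF_apply u_def)
  qed
  thus "is_projection (mkF e t t' g)" using proj_of vn_bounded[OF vn FN] apF' by blast
  show "is_projection e" using proj_of b(1) ap(1) m by blast
qed



lemma bop_lin2: "bounded_op A \<Longrightarrow> A (scaleR k (u + scaleR d v)) = scaleR k (A u + scaleR d (A v))"
  by (simp add: bop_add bop_scaleR)

lemma bounded_commutator: "bounded_op A \<Longrightarrow> bounded_op B \<Longrightarrow> bounded_op (commutator A B)"
  by (simp add: commutator_def bounded_diff bounded_comp)

theorem theorem3:
  fixes N1 N2 :: "('h::chilbert_space \<Rightarrow> 'h) set"
  assumes "von_neumann_algebra N1" and "von_neumann_algebra N2"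
    and "properly_infinite N1" and "properly_infinite N2"
    and "N1 \<subseteq> commutant N2"
    and "\<forall>X1\<in>N1. \<forall>X2\<in>N2. X1 \<noteq> zero_op \<and> X2 \<noteq> zero_op \<longrightarrow> X1 \<circ> X2 \<noteq> zero_op"
  shows "\<forall>\<Psi>::'h. \<forall>\<epsilon>>0. norm \<Psi> = 1 \<longrightarrow>
           (\<exists>\<Psi>'. norm \<Psi>' = 1 \<and> norm (\<Psi> - \<Psi>') < \<epsilon> \<and>
              EPR_incommensurable N1 N2 (vector_state \<Psi>'))"
proof (intro allI impI)
  fix \<Psi> :: 'h and \<epsilon> :: real
  assume eps: "\<epsilon> > 0" and nPsi: "norm \<Psi> = 1"
  define \<epsilon>' where "\<epsilon>' = min \<epsilon> 1"
  have e': "0 < \<epsilon>'" "\<epsilon>' \<le> \<epsilon>" "\<epsilon>' \<le> 1" using eps by (auto simp: \<epsilon>'_def)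
  define \<eta> where "\<eta> = \<epsilon>' / 32"
  have eta: "\<eta> > 0" using e' by (simp add: \<eta>_def)
  have psi0: "\<Psi> \<noteq> 0" using nPsi by auto
  obtain e t t' g where U1mem: "e \<in> N1" "t \<in> N1" "t' \<in> N1" "g \<in> N1"
    and U1ap: "adjpair e e" "adjpair t t'" "adjpair g g" and U1mu: "munits e t t' g"
    and U1nz: "\<exists>x. e x \<noteq> 0" and U1n: "norm (e \<Psi>) < \<eta>" "norm (g \<Psi>) < \<eta>"
    using units[OF assms(1) assms(3) psi0 eta] by blast
  obtain f s s' h where U2mem: "f \<in> N2" "s \<in> N2" "s' \<in> N2" "h \<in> N2"
    and U2ap: "adjpair f f" "adjpair s s'" "adjpair h h" and U2mu: "munits f s s' h"
    and U2nz: "\<exists>x. f x \<noteq> 0" and U2n: "norm (f \<Psi>) < \<eta>" "norm (h \<Psi>) < \<eta>"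
    using units[OF assms(2) assms(4) psi0 eta] by blast
  have B: "bounded_op e" "bounded_op t" "bounded_op t'" "bounded_op g"
     "bounded_op f" "bounded_op s" "bounded_op s'" "bounded_op h"
    using vn_bounded[OF assms(1)] vn_bounded[OF assms(2)] U1mem U2mem by auto
  have comm: "X (Y x) = Y (X x)" if "X \<in> N1" "Y \<in> N2" for X Y x
  proof -
    have "X \<in> commutant N2" using assms(5) that(1) by blast
    hence "Y \<circ> X = X \<circ> Y" using that(2) by (auto simp: commutant_def)
    thus ?thesis by (metis comp_apply)
  qed
  have C_e_f: "\<And>x. e (f x) = f (e x)" by (rule comm[OF U1mem(1) U2mem(1)])
  have C_e_s: "\<And>x. e (s x) = s (e x)" by (rule comm[OF U1mem(1) U2mem(2)])
  have C_e_sp: "\<And>x. e (s' x) = s' (e x)" by (rule comm[OF U1mem(1) U2mem(3)])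
  have C_e_h: "\<And>x. e (h x) = h (e x)" by (rule comm[OF U1mem(1) U2mem(4)])
  have C_t_f: "\<And>x. t (f x) = f (t x)" by (rule comm[OF U1mem(2) U2mem(1)])
  have C_t_s: "\<And>x. t (s x) = s (t x)" by (rule comm[OF U1mem(2) U2mem(2)])
  have C_t_sp: "\<And>x. t (s' x) = s' (t x)" by (rule comm[OF U1mem(2) U2mem(3)])
  have C_t_h: "\<And>x. t (h x) = h (t x)" by (rule comm[OF U1mem(2) U2mem(4)])
  have C_tp_f: "\<And>x. t' (f x) = f (t' x)" by (rule comm[OF U1mem(3) U2mem(1)])
  have C_tp_s: "\<And>x. t' (s x) = s (t' x)" by (rule comm[OF U1mem(3) U2mem(2)])
  have C_tp_sp: "\<And>x. t' (s' x) = s' (t' x)" by (rule comm[OF U1mem(3) U2mem(3)])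
  have C_tp_h: "\<And>x. t' (h x) = h (t' x)" by (rule comm[OF U1mem(3) U2mem(4)])
  have C_g_f: "\<And>x. g (f x) = f (g x)" by (rule comm[OF U1mem(4) U2mem(1)])
  have C_g_s: "\<And>x. g (s x) = s (g x)" by (rule comm[OF U1mem(4) U2mem(2)])
  have C_g_sp: "\<And>x. g (s' x) = s' (g x)" by (rule comm[OF U1mem(4) U2mem(3)])
  have C_g_h: "\<And>x. g (h x) = h (g x)" by (rule comm[OF U1mem(4) U2mem(4)])
  have m1: "\<And>x. e (e x) = e x \<and> e (t x) = 0 \<and> e (t' x) = t' x \<and> e (g x) = 0 \<and>
     t (e x) = t x \<and> t (t x) = 0 \<and> t (t' x) = g x \<and> t (g x) = 0 \<and>
     t' (e x) = 0 \<and> t' (t x) = e x \<and> t' (t' x) = 0 \<and> t' (g x) = t' x \<and>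
     g (e x) = 0 \<and> g (t x) = t x \<and> g (t' x) = 0 \<and> g (g x) = g x" using U1mu by (simp add: munits_def)
  have m2: "\<And>x. f (f x) = f x \<and> f (s x) = 0 \<and> f (s' x) = s' x \<and> f (h x) = 0 \<and>
     s (f x) = s x \<and> s (s x) = 0 \<and> s (s' x) = h x \<and> s (h x) = 0 \<and>
     s' (f x) = 0 \<and> s' (s x) = f x \<and> s' (s' x) = 0 \<and> s' (h x) = s' x \<and>
     h (f x) = 0 \<and> h (s x) = s x \<and> h (s' x) = 0 \<and> h (h x) = h x" using U2mu by (simp add: munits_def)
  note S = m1 m2 C_e_f C_e_s C_e_sp C_e_h C_t_f C_t_s C_t_sp C_t_h C_tp_f C_tp_s C_tp_sp C_tp_h C_g_f C_g_s C_g_sp C_g_h bop_add[OF B(1)] bop_diff[OF B(1)] bop_scaleR[OF B(1)] bop_zero[OF B(1)] bop_add[OF B(2)] bop_diff[OF B(2)] bop_scaleR[OF B(2)] bop_zero[OF B(2)] bop_add[OF B(3)] bop_diff[OF B(3)] bop_scaleR[OF B(3)] bop_zero[OF B(3)] bop_add[OF B(4)] bop_diff[OF B(4)] bop_scaleR[OF B(4)] bop_zero[OF B(4)] bop_add[OF B(5)] bop_diff[OF B(5)] bop_scaleR[OF B(5)] bop_zero[OF B(5)] bop_add[OF B(6)] bop_diff[OF B(6)] bop_scaleR[OF B(6)] bop_zero[OF B(6)] bop_add[OF B(7)] bop_diff[OF B(7)] bop_scaleR[OF B(7)] bop_zero[OF B(7)] bop_add[OF B(8)] bop_diff[OF B(8)]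 bop_scaleR[OF B(8)] bop_zero[OF B(8)]
  have enz: "e \<noteq> zero_op" using U1nz by (auto simp: zero_op_def)
  have fnz: "f \<noteq> zero_op" using U2nz by (auto simp: zero_op_def)
  have "e \<circ> f \<noteq> zero_op" using assms(6) U1mem(1) U2mem(1) enz fnz by blast
  then obtain x0 where x0: "e (f x0) \<noteq> 0" by (auto simp: zero_op_def fun_eq_iff)
  define va where "va = e (f x0)"
  define vb where "vb = t va"
  define vc where "vc = s va"
  define xi where "xi = va + t vc"
  define q where "q = \<Psi> - f \<Psi> - h \<Psi>"
  define chi where "chi = q - e q - g q"
  define F1 where "F1 = mkF e t t' g"
  define F2 where "F2 = mkF f s s' h"
  have va0: "va \<noteq> 0" using x0 by (simp add: va_def)
  have F1p: "F1 \<in> N1" "is_projection F1" "is_projection e"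
    unfolding F1_def by (rule mkF_props[OF assms(1) U1mem U1ap U1mu])+
  have F2p: "F2 \<in> N2" "is_projection F2" "is_projection f"
    unfolding F2_def by (rule mkF_props[OF assms(2) U2mem U2ap U2mu])+
  have bF: "bounded_op F1" "bounded_op F2" using F1p F2p by (auto simp: is_projection_def)
  have F1a: "F1 x = scaleR (1/2) (e x + g x + (t x + t' x))" for x by (simp add: F1_def mkF_apply)
  have F2a: "F2 x = scaleR (1/2) (f x + h x + (s x + s' x))" for x by (simp add: F2_def mkF_apply)
  have chi1: "e chi = 0" "g chi = 0" "t chi = 0" "t' chi = 0"
    unfolding chi_def q_def by (simp_all add: S)
  have chi2: "f chi = 0" "h chi = 0" "s chi = 0" "s' chi = 0"
    unfolding chi_def q_def by (simp_all add: S)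
  have F1chi: "F1 chi = 0" "F2 chi = 0" by (simp_all add: F1a F2a chi1 chi2)
  have xiE: "e xi - f xi = 0" unfolding xi_def vc_def va_def by (simp add: S)
  have xiF: "F1 xi - F2 xi = 0" unfolding xi_def vc_def va_def F1a F2a by (simp add: S algebra_simps)
  have cm1: "commutator e F1 xi = scaleR (1/2) (vc - vb)"
    unfolding commutator_def op_diff_def xi_def vc_def vb_def va_def F1a by (simp add: S algebra_simps)
  have cm2: "commutator f F2 xi = scaleR (1/2) (vb - vc)"
    unfolding commutator_def op_diff_def xi_def vc_def vb_def va_def F2a by (simp add: S algebra_simps)
  have vc0: "vc - vb \<noteq> 0"
  proof
    assume "vc - vb = 0"
    hence "e (vc - vb) = 0" by (simp add: S)
    moreover have "e (vc - vb) = vc" unfolding vc_def vb_def va_def by (simp add: S)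
    moreover have "s' vc = va" unfolding vc_def va_def by (simp add: S)
    ultimately show False using va0 by (simp add: S)
  qed
  have vb0: "vb - vc \<noteq> 0"
  proof
    assume "vb - vc = 0"
    hence "f (vb - vc) = 0" by (simp add: S)
    moreover have "f (vb - vc) = vb" unfolding vc_def vb_def va_def by (simp add: S)
    moreover have "t' vb = va" unfolding vb_def va_def by (simp add: S)
    ultimately show False using va0 by (simp add: S)
  qed
  have pf: "norm (f x) \<le> norm x" "norm (h x) \<le> norm x" for x
    using proj_norm_le[OF U2ap(1) _ B(5)] proj_norm_le[OF U2ap(3) _ B(8)] m2 by auto
  have d1: "norm (\<Psi> - chi) < 8 * \<eta>"
  proof -
    have eq: "\<Psi> - chi = (f \<Psi> + h \<Psi>) + ((e \<Psi> - f (e \<Psi>) - h (e \<Psi>)) + (g \<Psi> - f (g \<Psi>) - h (g \<Psi>)))"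
      unfolding chi_def q_def by (simp add: S algebra_simps)
    have n3: "norm (x - f x - h x) \<le> 3 * norm x" for x
    proof -
      have "norm (x - f x - h x) \<le> norm (x - f x) + norm (h x)" by (rule norm_triangle_ineq4)
      also have "\<dots> \<le> norm x + norm (f x) + norm (h x)" using norm_triangle_ineq4[of x "f x"] by simp
      finally show ?thesis using pf[of x] by simp
    qed
    have "norm (\<Psi> - chi) \<le> norm (f \<Psi> + h \<Psi>) + norm ((e \<Psi> - f (e \<Psi>) - h (e \<Psi>)) + (g \<Psi> - f (g \<Psi>) - h (g \<Psi>)))"
      unfolding eq by (rule norm_triangle_ineq)
    also have "\<dots> \<le> (norm (f \<Psi>) + norm (h \<Psi>)) + (norm (e \<Psi> - f (e \<Psi>) - h (e \<Psi>)) + norm (g \<Psi> - f (g \<Psi>) - h (g \<Psi>)))"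
      by (intro add_mono norm_triangle_ineq)
    also have "\<dots> \<le> (norm (f \<Psi>) + norm (h \<Psi>)) + (3 * norm (e \<Psi>) + 3 * norm (g \<Psi>))"
      by (intro add_mono n3 order_refl)
    also have "\<dots> < 8 * \<eta>" using U1n U2n by linarith
    finally show ?thesis .
  qed
  define \<delta> where "\<delta> = \<epsilon>' / (4 * (norm xi + 1))"
  have hp: "4 * (norm xi + 1) > (0::real)" by (smt (verit) norm_ge_zero)
  hence del: "\<delta> > 0" unfolding \<delta>_def using e'(1) by (metis divide_pos_pos)
  have d2: "norm (scaleR \<delta> xi) < \<epsilon>' / 4"
  proof -
    have "norm (scaleR \<delta> xi) = \<delta> * norm xi" using del by simp
    also have "\<dots> < \<delta> * (norm xi + 1)" using del by simp
    also have "\<dots> = \<epsilon>' / 4" unfolding \<delta>_def using hp by (simp add: field_simps)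
    finally show ?thesis .
  qed
  define y where "y = chi + scaleR \<delta> xi"
  define r where "r = norm (\<Psi> - y)"
  have r: "r < \<epsilon>' / 2"
  proof -
    have "\<Psi> - y = (\<Psi> - chi) - scaleR \<delta> xi" by (simp add: y_def algebra_simps)
    hence "r \<le> norm (\<Psi> - chi) + norm (scaleR \<delta> xi)" unfolding r_def by (metis norm_triangle_ineq4)
    thus ?thesis using d1 d2 by (simp add: \<eta>_def)
  qed
  have ny: "\<bar>norm y - 1\<bar> \<le> r" unfolding r_def using nPsi norm_triangle_ineq3[of \<Psi> y] by (simp add: abs_minus_commute)
  have ny0: "norm y > 0" using ny r e' by linarith
  define k where "k = 1 / norm y"
  have k0: "k \<noteq> 0" using ny0 by (simp add: k_def)
  define \<Psi>' where "\<Psi>' = scaleR k (chi + scaleR \<delta> xi)"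
  have n1: "norm \<Psi>' = 1" using ny0 by (simp add: \<Psi>'_def k_def y_def[symmetric])
  have dist: "norm (\<Psi> - \<Psi>') < \<epsilon>"
  proof -
    have "y - \<Psi>' = scaleR (1 - k) y" by (simp add: \<Psi>'_def y_def[symmetric] algebra_simps)
    hence "norm (y - \<Psi>') = \<bar>1 - k\<bar> * norm y" by simp
    also have "\<dots> = \<bar>(1 - k) * norm y\<bar>" by (simp add: abs_mult)
    also have "(1 - k) * norm y = norm y - 1" using ny0 by (simp add: k_def field_simps)
    finally have "norm (y - \<Psi>') = \<bar>norm y - 1\<bar>" .
    hence h: "norm (y - \<Psi>') \<le> r" using ny by simp
    have "\<Psi> - \<Psi>' = (\<Psi> - y) + (y - \<Psi>')" by simp
    hence "norm (\<Psi> - \<Psi>') \<le> r + norm (y - \<Psi>')" unfolding r_def by (metis norm_triangle_ineq)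
    thus ?thesis using h r e' by linarith
  qed
  have bD: "bounded_op (op_diff e f)" "bounded_op (op_diff F1 F2)" using B bF by (auto intro: bounded_diff)
  have bC: "bounded_op (commutator e F1)" "bounded_op (commutator f F2)"
    using B bF by (auto intro: bounded_commutator)
  have D1: "op_diff e f \<Psi>' = 0" unfolding \<Psi>'_def bop_lin2[OF bD(1)]
    using chi1 chi2 xiE by (simp add: op_diff_def)
  have D2: "op_diff F1 F2 \<Psi>' = 0" unfolding \<Psi>'_def bop_lin2[OF bD(2)]
    using F1chi xiF by (simp add: op_diff_def)
  have Cc: "commutator e F1 chi = 0" "commutator f F2 chi = 0"
    by (simp_all add: commutator_def op_diff_def chi1 chi2 F1chi S bop_zero[OF bF(1)] bop_zero[OF bF(2)])
  have K1: "commutator e F1 \<Psi>' \<noteq> 0" unfolding \<Psi>'_def bop_lin2[OF bC(1)] Cc cm1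
    using k0 del vc0 by simp
  have K2: "commutator f F2 \<Psi>' \<noteq> 0" unfolding \<Psi>'_def bop_lin2[OF bC(2)] Cc cm2
    using k0 del vb0 by simp
  have E1: "EPR_state (vector_state \<Psi>') e f"
    unfolding EPR_state_def vector_state_def using D1 bop_zero[OF bD(1)] by simp
  have E2: "EPR_state (vector_state \<Psi>') F1 F2"
    unfolding EPR_state_def vector_state_def using D2 bop_zero[OF bD(2)] by simp
  have "EPR_incommensurable N1 N2 (vector_state \<Psi>')"
    unfolding EPR_incommensurable_def
    using U1mem(1) F1p U2mem(1) F2p E1 E2 abs_sq_nonzero[OF bC(1) K1] abs_sq_nonzero[OF bC(2) K2]
    by blast
  thus "\<exists>\<Psi>'. norm \<Psi>' = 1 \<and> norm (\<Psi> - \<Psi>') < \<epsilon> \<and> EPR_incommensurable N1 N2 (vector_state \<Psi>')"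
    using n1 dist by blast
qed

end
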